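(* Let $k$ be an algebraically closed field of characteristic $p>0$, and let $f:\mathbb A^n_k\to\mathbb A^n_k$ be a homomorphism of algebraic groups $\mathbb G_a^n\to\mathbb G_a^n$, given by additive polynomials \[ f_j(x_1,\dots,x_n)=\sum_{i=1}^n\sum_{\ell=0}^{N_j}a_{j,i,\ell}\,x_i^{p^\ell},\qquad 1\le j\le n. \] Assume $f$ is finite and bijective on $k$-points (equivalently, $f$ is a finite radicial isogeny of $\mathbb G_a^n$). Then for every $k$-linear subspace $W\subset\mathbb A^n_k$, the reduced inverse image satisfies $f^{-1}(W)_{\mathrm{red}}\cong\mathbb A^{\dim W}_k$ as $k$-varieties. *)

theory Defs
  imports "HOL-Analysis.Analysis" "HOL-Computational_Algebra.Polynomial"
begin

text \<open>Over an infinite field (e.g. algebraically closed) these are exactly the functions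
  given by polynomials in k[x_1,...,x_n].\<close>
inductive_set polyfun :: "('k::comm_ring_1 ^ 'n \<Rightarrow> 'k) set" where
  pf_const: "(\<lambda>x. c) \<in> polyfun"
| pf_coord: "(\<lambda>x. x $ i) \<in> polyfun"
| pf_add: "g \<in> polyfun \<Longrightarrow> h \<in> polyfun \<Longrightarrow> (\<lambda>x. g x + h x) \<in> polyfun"
| pf_mult: "g \<in> polyfun \<Longrightarrow> h \<in> polyfun \<Longrightarrow> (\<lambda>x. g x * h x) \<in> polyfun"

definition polymap :: "('k::comm_ring_1 ^ 'n \<Rightarrow> 'k ^ 'm) \<Rightarrow> bool" where
  "polymap F \<longleftrightarrow> (\<forall>j. (\<lambda>x. F x $ j) \<in> polyfun)"

text \<open>The (reduced) closed subvariety V of A^n is isomorphic to A^d (d = CARD('d)):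
  mutually inverse morphisms A^d -> V and V -> A^d (morphisms between affine
  varieties are restrictions of polynomial maps).\<close>
definition iso_affine_space :: "('k::comm_ring_1 ^ 'n) set \<Rightarrow> 'd::finite itself \<Rightarrow> bool" where
  "iso_affine_space V (_::'d itself) \<longleftrightarrow>
     (\<exists>(\<phi>::'k^'n \<Rightarrow> 'k^'d) (\<psi>::'k^'d \<Rightarrow> 'k^'n).
        polymap \<phi> \<and> polymap \<psi> \<and> range \<psi> \<subseteq> V \<and>
        (\<forall>y. \<phi> (\<psi> y) = y) \<and> (\<forall>x\<in>V. \<psi> (\<phi> x) = x))"

definition addpoly_map ::
  "nat \<Rightarrow> ('n::finite \<Rightarrow> 'n \<Rightarrow> nat \<Rightarrow> 'k::comm_ring_1) \<Rightarrow> ('n \<Rightarrow> nat) \<Rightarrow> 'k^'n \<Rightarrow> 'k^'n" where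
  "addpoly_map p a N x = (\<chi> j. \<Sum>i\<in>UNIV. \<Sum>l\<le>N j. a j i l * (x $ i) ^ (p ^ l))"

text \<open>A morphism F : A^n -> A^m is finite: k[x_1..x_n] is integral over the subring
  k[F_1..F_m], i.e. each coordinate x_i satisfies a monic equation whose
  coefficients are polynomials in F_1,...,F_m.\<close>
definition finite_morphism :: "('k::comm_ring_1 ^ 'n \<Rightarrow> 'k ^ 'm) \<Rightarrow> bool" where
  "finite_morphism F \<longleftrightarrow>
     (\<forall>i. \<exists>(m::nat) (c::nat \<Rightarrow> ('k^'m \<Rightarrow> 'k)). (\<forall>r<m. c r \<in> polyfun) \<and>
        (\<forall>x. (x $ i) ^ m + (\<Sum>r<m. c r (F x) * (x $ i) ^ r) = 0))"

end

theory Submission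
  imports Defs "HOL-Computational_Algebra.Primes"
begin

definition adpn :: "nat \<Rightarrow> ('k::comm_ring_1 \<Rightarrow> 'k) \<Rightarrow> bool" where
  "adpn L g \<longleftrightarrow> (\<exists>c. g = (\<lambda>x. \<Sum>l<L. c l * x ^ (CHAR('k) ^ l)))"

definition adp :: "('k::comm_ring_1 \<Rightarrow> 'k) \<Rightarrow> bool" where
  "adp g \<longleftrightarrow> (\<exists>L. adpn L g)"

definition dg :: "('k::comm_ring_1 \<Rightarrow> 'k) \<Rightarrow> nat" where
  "dg g = (LEAST L. adpn L g)"

lemma adpn_mono:
  fixes g :: "'k::comm_ring_1 \<Rightarrow> 'k"
  assumes "adpn L g" "L \<le> M" shows "adpn M g"
proof -
  obtain c where c: "g = (\<lambda>x. \<Sum>l<L. c l * x ^ (CHAR('k) ^ l))" using assms(1) adpn_def by blast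
  define c' where "c' = (\<lambda>l. if l < L then c l else 0)"
  have "g = (\<lambda>x. \<Sum>l<M. c' l * x ^ (CHAR('k) ^ l))"
  proof
    fix x
    have "(\<Sum>l<M. c' l * x ^ (CHAR('k) ^ l)) = (\<Sum>l<L. c' l * x ^ (CHAR('k) ^ l))"
      by (rule sum.mono_neutral_right) (use assms(2) in \<open>auto simp: c'_def\<close>)
    also have "\<dots> = g x" by (simp add: c c'_def)
    finally show "g x = (\<Sum>l<M. c' l * x ^ (CHAR('k) ^ l))" by simp
  qed
  then show ?thesis unfolding adpn_def by blast
qed

lemma adpn_dg: "adpn L g \<Longrightarrow> adpn (dg g) g"
  unfolding dg_def by (rule LeastI)

lemma dg_le: "adpn L g \<Longrightarrow> dg g \<le> L"
  unfolding dg_def by (rule Least_le)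

lemma adp_dg: "adp g \<Longrightarrow> adpn (dg g) g"
  using adpn_dg adp_def by blast

lemma adpn_iff_dg: "adp g \<Longrightarrow> adpn L g \<longleftrightarrow> dg g \<le> L"
  using adp_dg adpn_mono dg_le by blast

lemma adpn_adp: "adpn L g \<Longrightarrow> adp g"
  unfolding adp_def by blast

lemma adpnI:
  fixes g :: "'k::comm_ring_1 \<Rightarrow> 'k"
  shows "g = (\<lambda>x. \<Sum>l<L. c l * x ^ (CHAR('k) ^ l)) \<Longrightarrow> adpn L g"
  unfolding adpn_def by blast

lemma adpI:
  fixes g :: "'k::comm_ring_1 \<Rightarrow> 'k"
  shows "g = (\<lambda>x. \<Sum>l<L. c l * x ^ (CHAR('k) ^ l)) \<Longrightarrow> adp g"
  using adpnI adpn_adp by blast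

lemma adpn0_iff: "adpn 0 g \<longleftrightarrow> g = (\<lambda>x. 0)"
  unfolding adpn_def by auto

lemma dg0_iff: "adp g \<Longrightarrow> dg g = 0 \<longleftrightarrow> g = (\<lambda>x. 0)"
proof -
  assume a: "adp g"
  have "dg g = 0 \<longleftrightarrow> adpn 0 g" using adpn_iff_dg[OF a, of 0] by simp
  also have "\<dots> \<longleftrightarrow> g = (\<lambda>x. 0)" by (rule adpn0_iff)
  finally show ?thesis .
qed

lemma dg_lead:
  fixes g :: "'k::comm_ring_1 \<Rightarrow> 'k"
  assumes "adp g" "dg g = Suc t"
  shows "\<exists>c. g = (\<lambda>x. \<Sum>l<Suc t. c l * x ^ (CHAR('k) ^ l)) \<and> c t \<noteq> 0"
proof -
  have "adpn (Suc t) g" using adp_dg[OF assms(1)] assms(2) by simp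
  then obtain c where c: "g = (\<lambda>x. \<Sum>l<Suc t. c l * x ^ (CHAR('k) ^ l))"
    unfolding adpn_def by blast
  have "c t \<noteq> 0"
  proof
    assume ct: "c t = 0"
    have "g = (\<lambda>x. \<Sum>l<t. c l * x ^ (CHAR('k) ^ l))" unfolding c using ct by simp
    then have "adpn t g" by (rule adpnI)
    from dg_le[OF this] assms(2) show False by simp
  qed
  with c show ?thesis by blast
qed

context
  assumes pr: "prime CHAR('k::comm_ring_1)"
begin

lemma frob_add: "((x::'k) + y) ^ (CHAR('k) ^ l) = x ^ (CHAR('k) ^ l) + y ^ (CHAR('k) ^ l)"
  using freshmans_dream'[OF pr] by blast

lemma frob_sum: "(sum (f::'b \<Rightarrow> 'k) A) ^ (CHAR('k) ^ l) = (\<Sum>i\<in>A. f i ^ (CHAR('k) ^ l))"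
  using freshmans_dream_sum'[OF pr] by blast

lemma adp_additive: "adp g \<Longrightarrow> g ((x::'k) + y) = g x + g y"
  unfolding adp_def adpn_def
  by (elim exE) (simp add: frob_add distrib_left sum.distrib)

lemma adp_zero: "adp (g::'k\<Rightarrow>'k) \<Longrightarrow> g 0 = 0"
  using adp_additive[of g 0 0] by simp

lemma adp_minus: "adp (g::'k\<Rightarrow>'k) \<Longrightarrow> g (- x) = - g x"
  using adp_additive[of g x "-x"] adp_zero[of g] by (simp add: eq_neg_iff_add_eq_0 add.commute)

lemma adp_diff: "adp (g::'k\<Rightarrow>'k) \<Longrightarrow> g (x - y) = g x - g y"
  using adp_additive[of g x "-y"] adp_minus[of g y] by simp

end

lemma adp_0: "adp (\<lambda>x. 0)"
  unfolding adp_def using adpn0_iff by blast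

lemma adp_mono: "adp (\<lambda>x::'k::comm_ring_1. c * x ^ (CHAR('k) ^ l))"
proof -
  have "(\<lambda>x::'k. c * x ^ (CHAR('k) ^ l)) = (\<lambda>x. \<Sum>m<Suc l. (if m = l then c else 0) * x ^ (CHAR('k) ^ m))"
    by (rule ext) (simp add: if_distrib[where f="\<lambda>a. a * _"] sum.delta' cong: if_cong)
  then show ?thesis by (rule adpI)
qed

lemma adp_id: "adp (\<lambda>x::'k::comm_ring_1. x)"
  using adp_mono[of 1 0] by simp

lemma adp_plus:
  fixes f g :: "'k::comm_ring_1 \<Rightarrow> 'k"
  assumes "adp f" "adp g" shows "adp (\<lambda>x::'k::comm_ring_1. f x + g x)"
proof -
  obtain L M where "adpn L f" "adpn M g" using assms adp_def by blast
  then have "adpn (max L M) f" "adpn (max L M) g" using adpn_mono[of L f "max L M"] adpn_mono[of M g "max L M"] by auto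
  then obtain c d where "f = (\<lambda>x. \<Sum>l<max L M. c l * x ^ (CHAR('k) ^ l))"
     "g = (\<lambda>x. \<Sum>l<max L M. d l * x ^ (CHAR('k) ^ l))" unfolding adpn_def by blast
  then have "(\<lambda>x. f x + g x) = (\<lambda>x. \<Sum>l<max L M. (c l + d l) * x ^ (CHAR('k) ^ l))"
    by (auto simp: sum.distrib distrib_right)
  then show ?thesis by (rule adpI)
qed

lemma adp_scale:
  fixes f :: "'k::comm_ring_1 \<Rightarrow> 'k"
  assumes "adp f" shows "adp (\<lambda>x::'k::comm_ring_1. c * f x)"
proof -
  obtain L c' where "f = (\<lambda>x. \<Sum>l<L. c' l * x ^ (CHAR('k) ^ l))" using assms adp_def adpn_def by blast
  then have "(\<lambda>x. c * f x) = (\<lambda>x. \<Sum>l<L. (c * c' l) * x ^ (CHAR('k) ^ l))"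
    by (auto simp: sum_distrib_left mult.assoc)
  then show ?thesis by (rule adpI)
qed

lemma adp_neg: "adp f \<Longrightarrow> adp (\<lambda>x::'k::comm_ring_1. - f x)"
  using adp_scale[of f "-1"] by simp

lemma adp_sum:
  assumes "\<And>i. i \<in> A \<Longrightarrow> adp (f i)"
  shows "adp (\<lambda>x::'k::comm_ring_1. \<Sum>i\<in>A. f i x)"
  using assms
proof (induction A rule: infinite_finite_induct)
  case (infinite A) then show ?case by (simp add: adp_0)
next
  case empty then show ?case by (simp add: adp_0)
next
  case (insert a F) then show ?case by (simp add: adp_plus)
qed

lemma adp_comp:
  assumes pr: "prime CHAR('k::comm_ring_1)" and "adp f" "adp g"
  shows "adp (\<lambda>x::'k. f (g x))"
proof -
  obtain L c where f: "f = (\<lambda>x. \<Sum>l<L. c l * x ^ (CHAR('k) ^ l))" using assms adp_def adpn_def by blast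
  obtain M d where g: "g = (\<lambda>x. \<Sum>m<M. d m * x ^ (CHAR('k) ^ m))" using assms adp_def adpn_def by blast
  have e: "(g x) ^ (CHAR('k) ^ l) = (\<Sum>m<M. d m ^ (CHAR('k) ^ l) * x ^ (CHAR('k) ^ (m + l)))" for x l
  proof -
    have "(g x) ^ (CHAR('k) ^ l) = (\<Sum>m<M. (d m * x ^ (CHAR('k) ^ m)) ^ (CHAR('k) ^ l))"
      unfolding g by (rule frob_sum[OF pr])
    also have "\<dots> = (\<Sum>m<M. d m ^ (CHAR('k) ^ l) * x ^ (CHAR('k) ^ (m + l)))"
      by (intro sum.cong refl) (simp add: power_mult_distrib power_add flip: power_mult)
    finally show ?thesis .
  qed
  have "(\<lambda>x. f (g x)) = (\<lambda>x. \<Sum>l<L. c l * (\<Sum>m<M. d m ^ (CHAR('k) ^ l) * x ^ (CHAR('k) ^ (m + l))))"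
    by (rule ext) (simp only: f e)
  moreover have "adp (\<lambda>x. \<Sum>l<L. c l * (\<Sum>m<M. d m ^ (CHAR('k) ^ l) * x ^ (CHAR('k) ^ (m + l))))"
    by (intro adp_sum adp_scale adp_mono)
  ultimately show ?thesis by simp
qed


lemma shift_sum:
  "(\<Sum>l<L. d l * (z::'a::comm_ring_1) ^ (P ^ (l + k))) = (\<Sum>l<L + k. (if l < k then 0 else d (l - k)) * z ^ (P ^ l))"
proof (induction L)
  case 0 then show ?case by simp
next
  case (Suc L)
  have "(\<Sum>l<Suc L + k. (if l < k then 0 else d (l - k)) * z ^ (P ^ l)) =
        (\<Sum>l<L + k. (if l < k then 0 else d (l - k)) * z ^ (P ^ l)) + d L * z ^ (P ^ (L + k))"
    by simp
  then show ?case using Suc by simp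
qed

lemma comp_monom:
  fixes B :: "'k::comm_ring_1 \<Rightarrow> 'k"
  assumes "B = (\<lambda>w. \<Sum>l<L. b l * w ^ (CHAR('k) ^ l))"
  shows "(\<lambda>z. B (q * z ^ (CHAR('k) ^ k))) =
    (\<lambda>z. \<Sum>l<L + k. (if l < k then 0 else b (l - k) * q ^ (CHAR('k) ^ (l - k))) * z ^ (CHAR('k) ^ l))"
proof
  fix z :: 'k
  have "B (q * z ^ (CHAR('k) ^ k)) = (\<Sum>l<L. (b l * q ^ (CHAR('k) ^ l)) * z ^ (CHAR('k) ^ (l + k)))"
    unfolding assms
    by (intro sum.cong refl) (simp add: power_mult_distrib power_add mult.commute mult.left_commute flip: power_mult)
  also have "\<dots> = (\<Sum>l<L + k. (if l < k then 0 else b (l - k) * q ^ (CHAR('k) ^ (l - k))) * z ^ (CHAR('k) ^ l))"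
    by (rule shift_sum)
  finally show "B (q * z ^ (CHAR('k) ^ k)) = \<dots>" .
qed

lemma adp_div:
  fixes A B :: "'k::alg_closed_field \<Rightarrow> 'k"
  assumes pr: "prime CHAR('k)" and B: "adp B" and dB: "dg B = Suc t"
  shows "adpn s A \<Longrightarrow> \<exists>Q R. adp Q \<and> adpn t R \<and> (\<forall>x. A x = B (Q x) + R x)"
proof (induction s arbitrary: A)
  case 0
  then have "adpn t A" using adpn_mono by blast
  then show ?case using adp_0 adp_zero[OF pr B] by (intro exI[of _ "\<lambda>x. 0"] exI[of _ A]) simp
next
  case (Suc s)
  show ?case
  proof (cases "Suc s \<le> t")
    case True
    then have "adpn t A" using adpn_mono Suc.prems by blast
    then show ?thesis using adp_0 adp_zero[OF pr B] by (intro exI[of _ "\<lambda>x. 0"] exI[of _ A]) simp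
  next
    case False
    then have ts: "t \<le> s" by simp
    obtain a where a: "A = (\<lambda>x. \<Sum>l<Suc s. a l * x ^ (CHAR('k) ^ l))"
      using Suc.prems unfolding adpn_def by blast
    obtain b where b: "B = (\<lambda>x. \<Sum>l<Suc t. b l * x ^ (CHAR('k) ^ l))" and bt: "b t \<noteq> 0"
      using dg_lead[OF B dB] by blast
    have "CHAR('k) ^ t > 0" using pr prime_gt_0_nat by simp
    then obtain q :: 'k where q: "q ^ (CHAR('k) ^ t) = a s / b t"
      using nth_root_exists by blast
    define k where "k = s - t"
    define e where "e = (\<lambda>l. if l < k then 0 else b (l - k) * q ^ (CHAR('k) ^ (l - k)))"
    have BQ: "(\<lambda>z. B (q * z ^ (CHAR('k) ^ k))) = (\<lambda>z. \<Sum>l<Suc s. e l * z ^ (CHAR('k) ^ l))"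
      using comp_monom[OF b, of q k] ts unfolding e_def k_def by simp
    have es: "e s = a s"
      using ts bt q by (simp add: e_def k_def)
    define A' where "A' = (\<lambda>z. A z - B (q * z ^ (CHAR('k) ^ k)))"
    have "A' = (\<lambda>z. \<Sum>l<s. (a l - e l) * z ^ (CHAR('k) ^ l))"
    proof
      fix z
      have "A' z = (\<Sum>l<Suc s. (a l - e l) * z ^ (CHAR('k) ^ l))"
        unfolding A'_def a using fun_cong[OF BQ, of z]
        by (simp add: sum_subtractf left_diff_distrib del: sum.lessThan_Suc)
      also have "\<dots> = (\<Sum>l<s. (a l - e l) * z ^ (CHAR('k) ^ l))"
        using es by simp
      finally show "A' z = \<dots>" .
    qed
    then have "adpn s A'" by (rule adpnI)
    from Suc.IH[OF this] obtain Q R where QR: "adp Q" "adpn t R" "\<forall>x. A' x = B (Q x) + R x"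
      by blast
    have "A x = B (Q x + q * x ^ (CHAR('k) ^ k)) + R x" for x
      using QR(3) adp_additive[OF pr B, of "Q x" "q * x ^ (CHAR('k) ^ k)"]
      unfolding A'_def by (simp add: algebra_simps)
    moreover have "adp (\<lambda>x. Q x + q * x ^ (CHAR('k) ^ k))"
      by (intro adp_plus QR(1) adp_mono)
    ultimately show ?thesis using QR(2) by blast
  qed
qed

lemma adp_surj:
  fixes g :: "'k::alg_closed_field \<Rightarrow> 'k"
  assumes pr: "prime CHAR('k)" and g: "adp g" and nz: "g \<noteq> (\<lambda>x. 0)"
  shows "\<exists>x. g x = y"
proof -
  have "dg g \<noteq> 0" using dg0_iff[OF g] nz by simp
  then obtain t where t: "dg g = Suc t" using not0_implies_Suc by blast
  obtain c where c: "g = (\<lambda>x. \<Sum>l<Suc t. c l * x ^ (CHAR('k) ^ l))" and ct: "c t \<noteq> 0"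
    using dg_lead[OF g t] by blast
  define pp where "pp = (\<Sum>l<Suc t. monom (c l) (CHAR('k) ^ l)) - [:y:]"
  have P1: "CHAR('k) > 1" using pr prime_gt_1_nat by blast
  have pos: "CHAR('k) ^ t > 0" using P1 by simp
  have "coeff pp (CHAR('k) ^ t) = (\<Sum>l<Suc t. (if CHAR('k) ^ l = CHAR('k) ^ t then c l else 0))"
    using pos P1 by (simp add: pp_def coeff_sum coeff_monom coeff_pCons')
  also have "\<dots> = (\<Sum>l<Suc t. (if l = t then c l else 0))"
    using P1 by (intro sum.cong refl) (simp add: power_inject_exp)
  also have "\<dots> = c t" by simp
  finally have "coeff pp (CHAR('k) ^ t) \<noteq> 0" using ct by simp
  then have "CHAR('k) ^ t \<le> degree pp" by (rule le_degree)
  then have "degree pp > 0" using pos by linarith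
  then obtain x where "poly pp x = 0" using alg_closed_imp_poly_has_root by blast
  then have "g x = y" by (simp add: pp_def c poly_sum poly_monom)
  then show ?thesis by blast
qed


definition sub :: "'n set \<Rightarrow> ('k::zero^'n) set" where
  "sub S = {x. \<forall>j. j \<notin> S \<longrightarrow> x$j = 0}"

definition amap :: "('k::comm_ring_1^'n::finite \<Rightarrow> 'k^'m) \<Rightarrow> bool" where
  "amap F \<longleftrightarrow> (\<forall>t. \<exists>r. (\<forall>i. adp (r i)) \<and> (\<forall>x. F x $ t = (\<Sum>i\<in>UNIV. r i (x$i))))"

lemma amap_row:
  assumes "amap F" obtains r where "\<forall>i. adp (r i)" "\<forall>x. F x $ t = (\<Sum>i\<in>UNIV. r i (x$i))"
  using assms unfolding amap_def by blast

lemma amap_rows: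
  assumes "amap F" obtains r where "\<forall>t i. adp (r t i)" "\<forall>t x. F x $ t = (\<Sum>i\<in>UNIV. r t i (x$i))"
proof -
  have "\<forall>t. \<exists>r. (\<forall>i. adp (r i)) \<and> (\<forall>x. F x $ t = (\<Sum>i\<in>UNIV. r i (x$i)))"
    using assms unfolding amap_def by blast
  then obtain r where "\<forall>t. (\<forall>i. adp (r t i)) \<and> (\<forall>x. F x $ t = (\<Sum>i\<in>UNIV. r t i (x$i)))"
    by metis
  then show ?thesis using that by blast
qed

context
  assumes pr: "prime CHAR('k::comm_ring_1)"
begin

lemma adp_sum_apply: "adp (g::'k\<Rightarrow>'k) \<Longrightarrow> g (\<Sum>i\<in>A. f i) = (\<Sum>i\<in>A. g (f i))"
proof (induction A rule: infinite_finite_induct)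
  case (infinite A) then show ?case using adp_zero[OF pr] by simp
next
  case empty then show ?case using adp_zero[OF pr] by simp
next
  case (insert a F) then show ?case by (simp add: adp_additive[OF pr insert.prems])
qed

lemma amap_add:
  fixes F :: "'k^'n::finite \<Rightarrow> 'k^'m"
  assumes "amap F" shows "F (x + y) = F x + F y"
proof (rule vec_eq_iff[THEN iffD2], rule allI)
  fix t
  obtain r where r: "\<forall>i. adp (r i)" "\<forall>x. F x $ t = (\<Sum>i\<in>UNIV. r i (x$i))"
    using amap_row[OF assms] by blast
  show "F (x + y) $ t = (F x + F y) $ t"
    using r by (simp add: sum.distrib adp_additive[OF pr r(1)[rule_format]])
qed

lemma amap_zero:
  fixes F :: "'k^'n::finite \<Rightarrow> 'k^'m"
  assumes "amap F" shows "F 0 = 0"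
  using amap_add[OF assms, of 0 0] by simp

lemma amap_neg:
  fixes F :: "'k^'n::finite \<Rightarrow> 'k^'m"
  assumes "amap F" shows "F (- x) = - F x"
  using amap_add[OF assms, of x "-x"] amap_zero[OF assms] by (simp add: eq_neg_iff_add_eq_0 add.commute)

lemma amap_diff:
  fixes F :: "'k^'n::finite \<Rightarrow> 'k^'m"
  assumes "amap F" shows "F (x - y) = F x - F y"
  using amap_add[OF assms, of x "-y"] amap_neg[OF assms, of y] by simp

lemma amap_comp:
  fixes F :: "'k^'m::finite \<Rightarrow> 'k^'p" and G :: "'k^'n::finite \<Rightarrow> 'k^'m"
  assumes F: "amap F" and G: "amap G"
  shows "amap (\<lambda>x. F (G x))"
  unfolding amap_def
proof
  fix t
  obtain r where r: "\<forall>i. adp (r i)" "\<forall>x. F x $ t = (\<Sum>i\<in>UNIV. r i (x$i))"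
    using amap_row[OF F] by blast
  obtain s where s: "\<forall>j i. adp (s j i)" "\<forall>j x. G x $ j = (\<Sum>i\<in>UNIV. s j i (x$i))"
    using amap_rows[OF G] by blast
  have "F (G x) $ t = (\<Sum>i\<in>UNIV. (\<lambda>z. \<Sum>j\<in>UNIV. r j (s j i z)) (x$i))" for x
  proof -
    have "F (G x) $ t = (\<Sum>j\<in>UNIV. r j (\<Sum>i\<in>UNIV. s j i (x$i)))" using r s by simp
    also have "\<dots> = (\<Sum>j\<in>UNIV. \<Sum>i\<in>UNIV. r j (s j i (x$i)))"
      by (simp add: adp_sum_apply[OF r(1)[rule_format]])
    also have "\<dots> = (\<Sum>i\<in>UNIV. \<Sum>j\<in>UNIV. r j (s j i (x$i)))" by (rule sum.swap)
    finally show ?thesis by simp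
  qed
  moreover have "\<forall>i. adp (\<lambda>z. \<Sum>j\<in>UNIV. r j (s j i z))"
  proof (intro allI adp_sum)
    fix i j show "adp (\<lambda>z. r j (s j i z))" using r(1) s(1) adp_comp[OF pr, of "r j" "s j i"] by blast
  qed
  ultimately show "\<exists>r. (\<forall>i. adp (r i)) \<and> (\<forall>x. F (G x) $ t = (\<Sum>i\<in>UNIV. r i (x $ i)))"
    by (intro exI[of _ "\<lambda>i z. \<Sum>j\<in>UNIV. r j (s j i z)"]) blast
qed

end

lemma adp_if_id: "adp (\<lambda>z::'k::comm_ring_1. if b then z else 0)"
  by (cases b) (simp_all add: adp_id adp_0)

lemma adp_if: "adp Q \<Longrightarrow> adp (\<lambda>z::'k::comm_ring_1. if b then Q z else 0)"
  by (cases b) (simp_all add: adp_0)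

lemma amap_id: "amap (\<lambda>x::'k::comm_ring_1^'n::finite. x)"
  unfolding amap_def
proof
  fix t :: 'n
  have "\<forall>x::'k^'n. x $ t = (\<Sum>i\<in>UNIV. (\<lambda>z. if i = t then z else 0) (x$i))"
    by simp
  moreover have "\<forall>i. adp (\<lambda>z::'k. if i = t then z else 0)" using adp_if_id by blast
  ultimately show "\<exists>r. (\<forall>i. adp (r i)) \<and> (\<forall>x::'k^'n. x $ t = (\<Sum>i\<in>UNIV. r i (x $ i)))"
    by (intro exI[of _ "\<lambda>i z. if i = t then z else 0"]) blast
qed

definition elop :: "'n \<Rightarrow> 'n \<Rightarrow> ('k \<Rightarrow> 'k) \<Rightarrow> 'k::plus^'n \<Rightarrow> 'k^'n" where
  "elop i j Q x = (\<chi> t. if t = j then x$t + Q (x$i) else x$t)"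

lemma elop_comp_neg:
  fixes x :: "'k::ab_group_add^'n"
  assumes "i \<noteq> j" shows "elop i j (\<lambda>z. - Q z) (elop i j Q x) = x"
  using assms by (simp add: elop_def vec_eq_iff)

lemma elop_comp_neg':
  fixes x :: "'k::ab_group_add^'n"
  assumes "i \<noteq> j" shows "elop i j Q (elop i j (\<lambda>z. - Q z) x) = x"
  using assms by (simp add: elop_def vec_eq_iff)

lemma elop_sub:
  fixes x :: "'k::comm_ring_1^'n"
  assumes "i \<in> I" "j \<in> I" "adp Q" "prime CHAR('k)" "x \<in> sub I"
  shows "elop i j Q x \<in> sub I"
  using assms by (auto simp: elop_def sub_def)

lemma amap_elop:
  fixes Q :: "'k::comm_ring_1 \<Rightarrow> 'k"
  assumes "adp Q"
  shows "amap (elop i j Q :: 'k^'n::finite \<Rightarrow> 'k^'n)"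
  unfolding amap_def
proof
  fix t :: 'n
  define r where "r = (\<lambda>l z. (if l = t then z else 0) + (if t = j \<and> l = i then Q z else 0))"
  have "\<forall>x::'k^'n. elop i j Q x $ t = (\<Sum>l\<in>UNIV. r l (x$l))"
    by (cases "t = j") (simp_all add: r_def elop_def sum.distrib)
  moreover have "\<forall>l. adp (r l)" unfolding r_def
    using assms by (intro allI adp_plus adp_if_id adp_if)
  ultimately show "\<exists>r. (\<forall>i. adp (r i)) \<and> (\<forall>x::'k^'n. elop i j Q x $ t = (\<Sum>i\<in>UNIV. r i (x $ i)))"
    by (intro exI[of _ r]) blast
qed


lemma row_reduce:
  fixes r :: "'n::finite \<Rightarrow> 'k::alg_closed_field \<Rightarrow> 'k" and I :: "'n set"
  assumes pr: "prime CHAR('k)" and Ine: "I \<noteq> {}"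
  shows "(\<forall>i. adp (r i)) \<Longrightarrow> \<exists>E E' i0 g. amap E \<and> amap E' \<and> (\<forall>x. E (E' x) = x) \<and> (\<forall>x. E' (E x) = x)
     \<and> E ` sub I \<subseteq> sub I \<and> E' ` sub I \<subseteq> sub I \<and> i0 \<in> I \<and> adp g
     \<and> (\<forall>y\<in>sub I. (\<Sum>i\<in>UNIV. r i ((E y)$i)) = g (y$i0))"
proof (induction "\<Sum>i\<in>I. dg (r i)" arbitrary: r rule: less_induct)
  case less
  note radp = less.prems[rule_format]
  show ?case
  proof (cases "\<exists>i\<in>I. \<exists>j\<in>I. i \<noteq> j \<and> r i \<noteq> (\<lambda>x. 0) \<and> r j \<noteq> (\<lambda>x. 0)")
    case True
    have "\<exists>i j. i\<in>I \<and> j\<in>I \<and> i\<noteq>j \<and> r i \<noteq> (\<lambda>x. 0) \<and> r j \<noteq> (\<lambda>x. 0) \<and> dg (r j) \<le> dg (r i)"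
    proof -
      from True obtain i j where h: "i\<in>I" "j\<in>I" "i\<noteq>j" "r i \<noteq> (\<lambda>x. 0)" "r j \<noteq> (\<lambda>x. 0)"
        by (elim bexE conjE) (rule that; assumption)
      show ?thesis
      proof (cases "dg (r j) \<le> dg (r i)")
        case True
        then show ?thesis using h by (intro exI[of _ i] exI[of _ j] conjI) assumption+
      next
        case False
        then have "dg (r i) \<le> dg (r j)" by simp
        moreover have "j \<noteq> i" using h(3) by simp
        ultimately show ?thesis using h by (intro exI[of _ j] exI[of _ i] conjI) assumption+
      qed
    qed
    then obtain i j where ij: "i\<in>I" "j\<in>I" "i\<noteq>j" "r i \<noteq> (\<lambda>x. 0)" "r j \<noteq> (\<lambda>x. 0)"
      "dg (r j) \<le> dg (r i)" by (elim exE conjE) (rule that; assumption)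
    have "dg (r j) \<noteq> 0" using dg0_iff[OF radp[of j]] ij(5) by simp
    then obtain t where t: "dg (r j) = Suc t" using not0_implies_Suc by blast
    obtain Q R where QR: "adp Q" "adpn t R" "\<forall>x. r i x = r j (Q x) + R x"
      using adp_div[OF pr radp[of j] t adp_dg[OF radp[of i]]] by (elim exE conjE) (rule that; assumption)
    define r' where "r' = r(i := R)"
    have r'adp: "\<forall>l. adp (r' l)" using radp adpn_adp[OF QR(2)] by (simp add: r'_def)
    have dR: "dg R \<le> t" using dg_le[OF QR(2)] .
    have "(\<Sum>l\<in>I. dg (r' l)) = dg (r' i) + (\<Sum>l\<in>I-{i}. dg (r' l))"
      using ij(1) by (simp add: sum.remove)
    also have "\<dots> = dg R + (\<Sum>l\<in>I-{i}. dg (r l))"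
      by (simp add: r'_def)
    also have "\<dots> < dg (r i) + (\<Sum>l\<in>I-{i}. dg (r l))"
      using dR t ij(6) by simp
    also have "\<dots> = (\<Sum>l\<in>I. dg (r l))"
      using ij(1) by (simp add: sum.remove)
    finally have lt: "(\<Sum>l\<in>I. dg (r' l)) < (\<Sum>l\<in>I. dg (r l))" .
    obtain E2 E2' i0 g where IH: "amap E2" "amap E2'" "\<forall>x. E2 (E2' x) = x" "\<forall>x. E2' (E2 x) = x"
      "E2 ` sub I \<subseteq> sub I" "E2' ` sub I \<subseteq> sub I" "i0 \<in> I" "adp g"
      "\<forall>y\<in>sub I. (\<Sum>l\<in>UNIV. r' l ((E2 y)$l)) = g (y$i0)"
      using less.hyps[OF lt r'adp] by (elim exE conjE) (rule that; assumption)
    define E1 :: "'k^'n \<Rightarrow> 'k^'n" where "E1 = elop i j (\<lambda>z. - Q z)"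
    define E1' :: "'k^'n \<Rightarrow> 'k^'n" where "E1' = elop i j Q"
    have key: "(\<Sum>l\<in>UNIV. r l (E1 x $ l)) = (\<Sum>l\<in>UNIV. r' l (x $ l))" for x
    proof -
      define h where "h = (\<lambda>l. r l (E1 x $ l) - r' l (x $ l))"
      have hz: "\<forall>l\<in>UNIV - {i, j}. h l = 0"
        by (simp add: h_def E1_def elop_def r'_def)
      have hj: "h j = - r j (Q (x$i))"
        using ij(3) adp_additive[OF pr radp[of j], of "x$j" "- Q (x$i)"] adp_minus[OF pr radp[of j]]
        by (simp add: h_def E1_def elop_def r'_def)
      have hi: "h i = r j (Q (x$i))"
        using ij(3) QR(3) by (simp add: h_def E1_def elop_def r'_def)
      have "(\<Sum>l\<in>UNIV. h l) = (\<Sum>l\<in>{i,j}. h l)"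
        by (rule sum.mono_neutral_right) (use hz in auto)
      also have "\<dots> = 0" using ij(3) hi hj by simp
      finally have "(\<Sum>l\<in>UNIV. h l) = 0" .
      then show ?thesis by (simp add: h_def sum_subtractf)
    qed
    have aE1: "amap E1" unfolding E1_def by (rule amap_elop, rule adp_neg, rule QR(1))
    have aE1': "amap E1'" unfolding E1'_def by (rule amap_elop, rule QR(1))
    have inv1: "\<forall>x. E1 (E1' x) = x" "\<forall>x. E1' (E1 x) = x"
      unfolding E1_def E1'_def using elop_comp_neg[OF ij(3)] elop_comp_neg'[OF ij(3)] by blast+
    have s1: "E1 ` sub I \<subseteq> sub I" "E1' ` sub I \<subseteq> sub I"
      unfolding E1_def E1'_def using elop_sub[OF ij(1,2) _ pr] adp_neg[OF QR(1)] QR(1) by blast+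
    show ?thesis
    proof (intro exI conjI)
      show "amap (\<lambda>x. E1 (E2 x))" by (rule amap_comp[OF pr aE1 IH(1)])
      show "amap (\<lambda>x. E2' (E1' x))" by (rule amap_comp[OF pr IH(2) aE1'])
      show "\<forall>x. E1 (E2 (E2' (E1' x))) = x" using IH(3) inv1 by simp
      show "\<forall>x. E2' (E1' (E1 (E2 x))) = x" using IH(4) inv1 by simp
      show "(\<lambda>x. E1 (E2 x)) ` sub I \<subseteq> sub I" using s1 IH(5) by blast
      show "(\<lambda>x. E2' (E1' x)) ` sub I \<subseteq> sub I" using s1 IH(6) by blast
      show "i0 \<in> I" by (rule IH(7))
      show "adp g" by (rule IH(8))
      show "\<forall>y\<in>sub I. (\<Sum>l\<in>UNIV. r l (E1 (E2 y) $ l)) = g (y $ i0)"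
        using key IH(9) by simp
    qed
  next
    case False
    have "\<exists>i0\<in>I. \<forall>l\<in>I. l \<noteq> i0 \<longrightarrow> r l = (\<lambda>x. 0)"
    proof (cases "\<exists>i\<in>I. r i \<noteq> (\<lambda>x. 0)")
      case True
      then obtain i where "i \<in> I" "r i \<noteq> (\<lambda>x. 0)" by blast
      then show ?thesis using False by blast
    next
      case F2: False
      from Ine obtain i where "i \<in> I" by blast
      then show ?thesis using F2 by blast
    qed
    then obtain i0 where i0: "i0 \<in> I" "\<forall>l\<in>I. l \<noteq> i0 \<longrightarrow> r l = (\<lambda>x. 0)" by blast
    have main: "(\<Sum>l\<in>UNIV. r l (y$l)) = r i0 (y$i0)" if y: "y \<in> sub I" for y
    proof -
      have "\<forall>l\<in>UNIV - {i0}. r l (y$l) = 0"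
      proof
        fix l assume l: "l \<in> UNIV - {i0}"
        show "r l (y$l) = 0"
        proof (cases "l \<in> I")
          case True then show ?thesis using i0 l by simp
        next
          case False then have "y$l = 0" using y by (simp add: sub_def)
          then show ?thesis using adp_zero[OF pr radp[of l]] by simp
        qed
      qed
      then have "(\<Sum>l\<in>UNIV. r l (y$l)) = (\<Sum>l\<in>{i0}. r l (y$l))"
        by (intro sum.mono_neutral_right) auto
      then show ?thesis by simp
    qed
    show ?thesis
    proof (intro exI conjI)
      show "amap (\<lambda>x::'k^'n. x)" by (rule amap_id)
      show "amap (\<lambda>x::'k^'n. x)" by (rule amap_id)
      show "\<forall>x::'k^'n. x = x" by simp
      show "\<forall>x::'k^'n. x = x" by simp
      show "(\<lambda>x. x) ` sub I \<subseteq> sub I" by simp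
      show "(\<lambda>x. x) ` sub I \<subseteq> sub I" by simp
      show "i0 \<in> I" by (rule i0(1))
      show "adp (r i0)" by (rule radp)
      show "\<forall>y\<in>sub I. (\<Sum>i\<in>UNIV. r i (y $ i)) = r i0 (y $ i0)" using main by blast
    qed
  qed
qed


lemma sub_remove: "sub (I - {i}) = {y \<in> sub I. y$i = (0::'k::zero)}"
  by (auto simp: sub_def)

lemma sub_mono: "I \<subseteq> J \<Longrightarrow> sub I \<subseteq> (sub J :: ('k::zero^'n) set)"
  by (auto simp: sub_def)

lemma axis_sub: "i \<in> I \<Longrightarrow> axis i a \<in> sub I"
  by (auto simp: sub_def axis_def)

lemma sub_add: "x \<in> sub I \<Longrightarrow> y \<in> sub I \<Longrightarrow> x + y \<in> (sub I :: ('k::monoid_add^'n) set)"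
  by (auto simp: sub_def)

lemma sub_diff: "x \<in> sub I \<Longrightarrow> y \<in> sub I \<Longrightarrow> x - y \<in> (sub I :: ('k::group_add^'n) set)"
  by (auto simp: sub_def)

lemma sub_empty: "sub {} = {0::'k::zero^'n}"
  by (auto simp: sub_def vec_eq_iff)

lemma sub_UNIV: "sub UNIV = UNIV"
  by (auto simp: sub_def)

lemma sub_Compl: "sub (- J) = {z. \<forall>j\<in>J. z$j = (0::'k::zero)}"
  by (auto simp: sub_def)

lemma AG:
  fixes K :: "'k::alg_closed_field^'n::finite \<Rightarrow> 'k^'n"
  assumes pr: "prime CHAR('k)"
  shows "amap K \<Longrightarrow> card I = card J \<Longrightarrow> K ` sub I \<subseteq> sub J \<Longrightarrow> inj_on K (sub I) \<Longrightarrow> K ` sub I = sub J"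
proof (induction "card I" arbitrary: I J K)
  case 0
  then have "I = {}" "J = {}" by auto
  then show ?case using amap_zero[OF pr "0.prems"(1)] by (simp add: sub_empty)
next
  case (Suc m)
  note aK = Suc.prems(1) and cIJ = Suc.prems(2) and KIJ = Suc.prems(3) and injK = Suc.prems(4)
  have "I \<noteq> {}" "J \<noteq> {}" using Suc.hyps(2) cIJ by auto
  then obtain j1 where j1: "j1 \<in> J" by blast
  obtain r where r: "\<forall>i. adp (r i)" "\<forall>x. K x $ j1 = (\<Sum>i\<in>UNIV. r i (x$i))"
    using amap_row[OF aK] by blast
  obtain E E' i0 g where RR: "amap E" "amap E'" "\<forall>x. E (E' x) = x" "\<forall>x. E' (E x) = x"
      "E ` sub I \<subseteq> sub I" "E' ` sub I \<subseteq> sub I" "i0 \<in> I" "adp g"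
      "\<forall>y\<in>sub I. (\<Sum>i\<in>UNIV. r i ((E y)$i)) = g (y$i0)"
    using row_reduce[OF pr \<open>I \<noteq> {}\<close> r(1)] by (elim exE conjE) (rule that; assumption)
  define K' where "K' = (\<lambda>y. K (E y))"
  have aK': "amap K'" unfolding K'_def by (rule amap_comp[OF pr aK RR(1)])
  have rowK': "K' y $ j1 = g (y$i0)" if "y \<in> sub I" for y
    using RR(9) that r(2) by (simp add: K'_def)
  have K'sub: "K' y \<in> sub J" if "y \<in> sub I" for y
    using that RR(5) KIJ by (auto simp: K'_def)
  have injK': "inj_on K' (sub I)"
  proof (rule inj_onI)
    fix y1 y2 assume y: "y1 \<in> sub I" "y2 \<in> sub I" "K' y1 = K' y2"
    then have "E y1 = E y2" using injK RR(5) unfolding K'_def inj_on_def by blast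
    then have "E' (E y1) = E' (E y2)" by simp
    then show "y1 = y2" using RR(4) by simp
  qed
  have sI: "sub (I - {i0}) \<subseteq> sub I" by (rule sub_mono) auto
  have g0: "g 0 = 0" by (rule adp_zero[OF pr RR(8)])
  have IH: "K' ` sub (I - {i0}) = sub (J - {j1})"
  proof (rule Suc.hyps(1))
    show "m = card (I - {i0})" using Suc.hyps(2) RR(7) by simp
    show "amap K'" by (rule aK')
    show "card (I - {i0}) = card (J - {j1})" using cIJ RR(7) j1 by simp
    show "K' ` sub (I - {i0}) \<subseteq> sub (J - {j1})"
    proof
      fix z assume "z \<in> K' ` sub (I - {i0})"
      then obtain y where y: "y \<in> sub (I - {i0})" "z = K' y" by blast
      have "y \<in> sub I" "y $ i0 = 0" using y(1) by (auto simp: sub_remove)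
      then show "z \<in> sub (J - {j1})" using y(2) rowK' K'sub g0 by (simp add: sub_remove)
    qed
    show "inj_on K' (sub (I - {i0}))" using injK' sI inj_on_subset by blast
  qed
  have ginj: "a = 0" if "g a = 0" for a
  proof -
    define y where "y = axis i0 a"
    have yI: "y \<in> sub I" using RR(7) axis_sub y_def by blast
    have "K' y \<in> sub (J - {j1})" using rowK'[OF yI] K'sub[OF yI] that
      by (simp add: sub_remove y_def axis_def)
    then obtain y'' where y'': "y'' \<in> sub (I - {i0})" "K' y'' = K' y" using IH by force
    then have "y'' = y" using injK' sI yI unfolding inj_on_def by blast
    then have "y $ i0 = 0" using y'' by (simp add: sub_remove)
    then show "a = 0" by (simp add: y_def axis_def)
  qed
  have gnz: "g \<noteq> (\<lambda>x. 0)"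
  proof
    assume "g = (\<lambda>x. 0)"
    then have "(1::'k) = 0" using ginj[of 1] by simp
    then show False by simp
  qed
  show ?case
  proof
    show "K ` sub I \<subseteq> sub J" by (rule KIJ)
    show "sub J \<subseteq> K ` sub I"
    proof
      fix z :: "'k^'n" assume z: "z \<in> sub J"
      obtain a where a: "g a = z $ j1" using adp_surj[OF pr RR(8) gnz] by blast
      define y1 where "y1 = axis i0 a"
      have y1I: "y1 \<in> sub I" using RR(7) axis_sub y1_def by blast
      have "z - K' y1 \<in> sub (J - {j1})"
        using sub_diff[OF z K'sub[OF y1I]] rowK'[OF y1I] a
        by (simp add: sub_remove y1_def axis_def)
      then obtain y'' where y'': "y'' \<in> sub (I - {i0})" "K' y'' = z - K' y1" using IH by force
      have yy: "y'' + y1 \<in> sub I" using sub_add[OF _ y1I] y''(1) sI by blast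
      have "K' (y'' + y1) = z" using amap_add[OF pr aK'] y''(2) by simp
      then have "z = K (E (y'' + y1))" by (simp add: K'_def)
      moreover have "E (y'' + y1) \<in> sub I" using RR(5) yy by blast
      ultimately show "z \<in> K ` sub I" by blast
    qed
  qed
qed


lemma main_lemma:
  fixes G :: "'k::alg_closed_field^'n::finite \<Rightarrow> 'k^'n" and J :: "'n set"
  assumes pr: "prime CHAR('k)" and aG: "amap G" and bG: "bij G"
  shows "\<exists>(P::'k^'n \<Rightarrow> 'k^'n) (P'::'k^'n \<Rightarrow> 'k^'n) (I::'n set). amap P \<and> amap P' \<and> (\<forall>x. P (P' x) = x) \<and> (\<forall>x. P' (P x) = x)
     \<and> card I + card J = CARD('n) \<and> {x. \<forall>j\<in>J. G x $ j = 0} = P ` sub I"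
proof -
  have "finite J" by simp
  then show ?thesis
  proof (induction J rule: finite_induct)
    case empty
    have e1: "{x::'k^'n. \<forall>j\<in>{}. G x $ j = 0} = (\<lambda>x. x) ` sub UNIV" by (simp add: sub_UNIV)
    have e2: "card (UNIV::'n set) + card ({}::'n set) = CARD('n)" by simp
    have e3: "amap (\<lambda>x::'k^'n. x)" by (rule amap_id)
    show ?case
      apply (rule exI[of _ "\<lambda>x::'k^'n. x"])
      apply (rule exI[of _ "\<lambda>x::'k^'n. x"])
      apply (rule exI[of _ "UNIV::'n set"])
      using e1 e2 e3 by simp
  next
    case (insert j0 J')
    obtain P P' :: "'k^'n \<Rightarrow> 'k^'n" and I' :: "'n set" where IH: "amap P" "amap P'" "\<forall>x. P (P' x) = x" "\<forall>x. P' (P x) = x"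
       "card I' + card J' = CARD('n)" "{x. \<forall>j\<in>J'. G x $ j = 0} = P ` sub I'"
      using insert.IH by (elim exE conjE) (rule that; assumption)
    define H where "H = (\<lambda>y. G (P y))"
    have aH: "amap H" unfolding H_def by (rule amap_comp[OF pr aG IH(1)])
    have HI: "H ` sub I' = sub (- J')"
    proof
      show "H ` sub I' \<subseteq> sub (- J')"
      proof
        fix z assume "z \<in> H ` sub I'"
        then obtain y where "y \<in> sub I'" "z = H y" by blast
        then have "P y \<in> {x. \<forall>j\<in>J'. G x $ j = 0}" using IH(6) by blast
        then show "z \<in> sub (- J')" using \<open>z = H y\<close> by (simp add: sub_Compl H_def)
      qed
      show "sub (- J') \<subseteq> H ` sub I'"
      proof
        fix z :: "'k^'n" assume z: "z \<in> sub (- J')"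
        obtain x where x: "G x = z" using bG by (metis bij_def surj_def)
        then have "x \<in> {x. \<forall>j\<in>J'. G x $ j = 0}" using z by (simp add: sub_Compl)
        then obtain y where "y \<in> sub I'" "x = P y" using IH(6) by blast
        then show "z \<in> H ` sub I'" using x by (auto simp: H_def)
      qed
    qed
    have "card J' < CARD('n)"
      using insert.hyps(2) by (intro psubset_card_mono) auto
    then have "I' \<noteq> {}" using IH(5) by auto
    obtain r where r: "\<forall>i. adp (r i)" "\<forall>x. H x $ j0 = (\<Sum>i\<in>UNIV. r i (x$i))"
      using amap_row[OF aH] by blast
    obtain E E' i0 g where RR: "amap E" "amap E'" "\<forall>x. E (E' x) = x" "\<forall>x. E' (E x) = x"
        "E ` sub I' \<subseteq> sub I'" "E' ` sub I' \<subseteq> sub I'" "i0 \<in> I'" "adp g"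
        "\<forall>y\<in>sub I'. (\<Sum>i\<in>UNIV. r i ((E y)$i)) = g (y$i0)"
      using row_reduce[OF pr \<open>I' \<noteq> {}\<close> r(1)] by (elim exE conjE) (rule that; assumption)
    define H' where "H' = (\<lambda>y. H (E y))"
    have aH': "amap H'" unfolding H'_def by (rule amap_comp[OF pr aH RR(1)])
    have EI: "E ` sub I' = sub I'"
    proof
      show "E ` sub I' \<subseteq> sub I'" by (rule RR(5))
      show "sub I' \<subseteq> E ` sub I'"
      proof
        fix y :: "'k^'n" assume "y \<in> sub I'"
        then have "E' y \<in> sub I'" "E (E' y) = y" using RR(6) RR(3) by auto
        then show "y \<in> E ` sub I'" by (metis image_eqI)
      qed
    qed
    have H'I: "H' ` sub I' = sub (- J')"
      using HI EI unfolding H'_def by (metis image_image)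
    have injH': "inj H'"
    proof (rule injI)
      fix y1 y2 assume "H' y1 = H' y2"
      then have "G (P (E y1)) = G (P (E y2))" by (simp add: H'_def H_def)
      then have "P (E y1) = P (E y2)" using bG by (simp add: bij_def inj_eq)
      then have "P' (P (E y1)) = P' (P (E y2))" by simp
      then have "E y1 = E y2" using IH(4) by simp
      then have "E' (E y1) = E' (E y2)" by simp
      then show "y1 = y2" using RR(4) by simp
    qed
    have rowH': "H' y $ j0 = g (y$i0)" if "y \<in> sub I'" for y
      using RR(9) that r(2) by (simp add: H'_def)
    have sI: "sub (I' - {i0}) \<subseteq> sub I'" by (rule sub_mono) auto
    have g0: "g 0 = 0" by (rule adp_zero[OF pr RR(8)])
    have cJ: "card (- insert j0 J') = CARD('n) - card (insert j0 J')"
      by (simp add: Compl_eq_Diff_UNIV card_Diff_subset)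
    have AGr: "H' ` sub (I' - {i0}) = sub (- insert j0 J')"
    proof (rule AG[OF pr aH'])
      show "card (I' - {i0}) = card (- insert j0 J')"
        using cJ IH(5) RR(7) insert.hyps by simp
      show "H' ` sub (I' - {i0}) \<subseteq> sub (- insert j0 J')"
      proof
        fix z assume "z \<in> H' ` sub (I' - {i0})"
        then obtain y where y: "y \<in> sub (I' - {i0})" "z = H' y" by blast
        have yI: "y \<in> sub I'" "y $ i0 = 0" using y(1) by (auto simp: sub_remove)
        have "H' y \<in> H' ` sub I'" using yI(1) by (rule imageI)
        then have "H' y \<in> sub (- J')" using H'I by simp
        then show "z \<in> sub (- insert j0 J')" using y(2) rowH'[OF yI(1)] yI(2) g0
          by (simp add: sub_Compl)
      qed
      show "inj_on H' (sub (I' - {i0}))" using injH' by (rule inj_on_subset) simp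
    qed
    have ginj: "a = 0" if "g a = 0" for a
    proof -
      define y where "y = axis i0 a"
      have yI: "y \<in> sub I'" using RR(7) axis_sub y_def by blast
      have "H' y \<in> H' ` sub I'" using yI by (rule imageI)
      then have "H' y \<in> sub (- J')" using H'I by simp
      then have "H' y \<in> sub (- insert j0 J')" using rowH'[OF yI] that
        by (simp add: sub_Compl y_def axis_def)
      then obtain y'' where y'': "y'' \<in> sub (I' - {i0})" "H' y'' = H' y" using AGr by force
      then have "y'' = y" using injH' by (simp add: inj_eq)
      then have "y $ i0 = 0" using y'' by (simp add: sub_remove)
      then show "a = 0" by (simp add: y_def axis_def)
    qed
    show ?case
    proof (intro exI conjI)
      show "amap (\<lambda>y. P (E y))" by (rule amap_comp[OF pr IH(1) RR(1)])
      show "amap (\<lambda>x. E' (P' x))" by (rule amap_comp[OF pr RR(2) IH(2)])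
      show "\<forall>x. P (E (E' (P' x))) = x" using RR(3) IH(3) by simp
      show "\<forall>x. E' (P' (P (E x))) = x" using RR(4) IH(4) by simp
      show "card (I' - {i0}) + card (insert j0 J') = CARD('n)"
      proof -
        have "card I' > 0" using RR(7) by (auto simp: card_gt_0_iff)
        then show ?thesis using IH(5) insert.hyps RR(7) by simp
      qed
      show "{x. \<forall>j\<in>insert j0 J'. G x $ j = 0} = (\<lambda>y. P (E y)) ` sub (I' - {i0})"
      proof
        show "(\<lambda>y. P (E y)) ` sub (I' - {i0}) \<subseteq> {x. \<forall>j\<in>insert j0 J'. G x $ j = 0}"
        proof
          fix x assume "x \<in> (\<lambda>y. P (E y)) ` sub (I' - {i0})"
          then obtain y where y: "y \<in> sub (I' - {i0})" "x = P (E y)" by blast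
          have "H' y \<in> sub (- insert j0 J')" using AGr y(1) by blast
          then show "x \<in> {x. \<forall>j\<in>insert j0 J'. G x $ j = 0}"
            using y(2) by (simp add: sub_Compl H'_def H_def)
        qed
        show "{x. \<forall>j\<in>insert j0 J'. G x $ j = 0} \<subseteq> (\<lambda>y. P (E y)) ` sub (I' - {i0})"
        proof
          fix x assume x: "x \<in> {x. \<forall>j\<in>insert j0 J'. G x $ j = 0}"
          then have "x \<in> {x. \<forall>j\<in>J'. G x $ j = 0}" by simp
          then obtain y' where y': "y' \<in> sub I'" "x = P y'" using IH(6) by blast
          define y where "y = E' y'"
          have yI: "y \<in> sub I'" using RR(6) y'(1) y_def by blast
          have Ey: "E y = y'" using RR(3) y_def by simp
          have "H' y = G x" using Ey y'(2) by (simp add: H'_def H_def)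
          then have "g (y $ i0) = 0" using rowH'[OF yI] x by simp
          then have "y $ i0 = 0" by (rule ginj)
          then have "y \<in> sub (I' - {i0})" using yI by (simp add: sub_remove)
          then show "x \<in> (\<lambda>y. P (E y)) ` sub (I' - {i0})" using Ey y'(2) by blast
        qed
      qed
    qed
  qed
qed


lemma sub_subspace: "vec.subspace (sub D :: ('k::field^'n) set)"
  unfolding vec.subspace_def by (auto simp: sub_def)

lemma span_axes: "vec.span ((\<lambda>d. axis d (1::'k::field)) ` D) = (sub D :: ('k^'n::finite) set)"
proof
  show "vec.span ((\<lambda>d. axis d 1) ` D) \<subseteq> sub D"
    by (rule vec.span_minimal[OF _ sub_subspace]) (auto simp: sub_def axis_def)
  show "sub D \<subseteq> vec.span ((\<lambda>d. axis d (1::'k)) ` D)"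
  proof
    fix x :: "'k^'n" assume x: "x \<in> sub D"
    have "x = (\<Sum>d\<in>D. x$d *s axis d 1)"
    proof (subst vec_eq_iff, rule allI)
      fix j
      have "(\<Sum>d\<in>D. x$d *s axis d (1::'k)) $ j = (\<Sum>d\<in>D. x$d * (if j = d then 1 else 0))"
        by (simp add: sum_component axis_def)
      also have "\<dots> = (if j \<in> D then x$j else 0)"
        by (simp add: if_distrib[where f="\<lambda>a. _ * a"] sum.delta' cong: if_cong)
      also have "\<dots> = x$j" using x by (auto simp: sub_def)
      finally show "x $ j = (\<Sum>d\<in>D. x$d *s axis d 1) $ j" by simp
    qed
    also have "\<dots> \<in> vec.span ((\<lambda>d. axis d 1) ` D)"
      by (intro vec.span_sum vec.span_scale vec.span_base) auto
    finally show "x \<in> vec.span ((\<lambda>d. axis d 1) ` D)" .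
  qed
qed

lemma lin_iso_sub:
  fixes W :: "('k::field^'n::finite) set"
  assumes W: "vec.subspace W"
  shows "\<exists>(L::'k^'n \<Rightarrow> 'k^'n) (D::'n set). Vector_Spaces.linear (*s) (*s) L \<and> bij L \<and> card D = vec.dim W \<and> (\<forall>y. y \<in> W \<longleftrightarrow> L y \<in> sub D)"
proof -
  obtain B where B: "B \<subseteq> W" "vec.independent B" "W \<subseteq> vec.span B" "card B = vec.dim W"
    using vec.basis_exists by blast
  define C where "C = vec.extend_basis B"
  have C: "B \<subseteq> C" "vec.independent C" "vec.span C = UNIV"
    unfolding C_def using vec.extend_basis_superset vec.independent_extend_basis vec.span_extend_basis B(2)
    by auto
  have fC: "finite C" using C(2) vec.finiteI_independent by blast
  have "card C = vec.dim (UNIV :: ('k^'n) set)"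
    using C vec.basis_card_eq_dim by blast
  also have "\<dots> = CARD('n)" by (simp add: card_cart_basis)
  finally have cC: "card C = CARD('n)" .
  have fU: "finite (UNIV::'n set)" by simp
  obtain \<gamma> where gam: "bij_betw \<gamma> C (UNIV::'n set)"
    using finite_same_card_bij[OF fC fU] cC by auto
  define L where "L = vec.construct C (\<lambda>c. axis (\<gamma> c) (1::'k))"
  have linL: "Vector_Spaces.linear (*s) (*s) L"
    unfolding L_def by (rule vec.linear_construct[OF C(2)])
  interpret lL: Vector_Spaces.linear "(*s)" "(*s)" L by (rule linL)
  have Lc: "L c = axis (\<gamma> c) 1" if "c \<in> C" for c
    unfolding L_def by (rule vec.construct_basis[OF C(2) that])
  have LimS: "L ` S = (\<lambda>d. axis d 1) ` (\<gamma> ` S)" if "S \<subseteq> C" for S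
    using Lc that by (auto simp: image_image intro!: image_cong)
  have surjL: "surj L"
  proof -
    have "L ` UNIV = L ` vec.span C" using C(3) by simp
    also have "\<dots> = vec.span (L ` C)" by (rule lL.span_image[symmetric])
    also have "\<dots> = vec.span ((\<lambda>d. axis d 1) ` (\<gamma> ` C))" using LimS[of C] by simp
    also have "\<gamma> ` C = UNIV" using gam by (simp add: bij_betw_def)
    finally show ?thesis using span_axes[of "UNIV::'n set"] sub_UNIV by (metis)
  qed
  have injL: "inj L"
    by (rule vec.linear_surjective_imp_injective[OF linL surjL]) simp
  define D where "D = \<gamma> ` B"
  have cD: "card D = vec.dim W"
    unfolding D_def using B(4) gam C(1) by (metis bij_betw_def card_image inj_on_subset)
  have LW: "L ` W = sub D"
  proof -
    have "W = vec.span B" using vec.span_subspace[OF B(1) B(3) W] by simp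
    then have "L ` W = vec.span (L ` B)" by (simp add: lL.span_image)
    also have "\<dots> = vec.span ((\<lambda>d. axis d 1) ` D)" using LimS[OF C(1)] D_def by simp
    also have "\<dots> = sub D" by (rule span_axes)
    finally show ?thesis .
  qed
  have "\<forall>y. y \<in> W \<longleftrightarrow> L y \<in> sub D"
  proof
    fix y
    show "y \<in> W \<longleftrightarrow> L y \<in> sub D"
    proof
      assume "y \<in> W" then show "L y \<in> sub D" using LW by blast
    next
      assume "L y \<in> sub D"
      then obtain w where "w \<in> W" "L y = L w" using LW by (metis imageE)
      then show "y \<in> W" using injL by (metis injD)
    qed
  qed
  then show ?thesis using linL surjL injL cD by (intro exI[of _ L] exI[of _ D]) (simp add: bij_def)
qed


lemma pf_sum:
  fixes f :: "'b \<Rightarrow> ('k::comm_ring_1^'n \<Rightarrow> 'k)"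
  shows "(\<And>a. a \<in> A \<Longrightarrow> f a \<in> polyfun) \<Longrightarrow> (\<lambda>x. \<Sum>a\<in>A. f a x) \<in> polyfun"
proof (induction A rule: infinite_finite_induct)
  case (infinite A) then show ?case using pf_const[of 0] by simp
next
  case empty then show ?case using pf_const[of 0] by simp
next
  case (insert a F)
  have "(\<lambda>x. f a x + (\<Sum>a\<in>F. f a x)) \<in> polyfun"
    using pf_add[of "f a" "\<lambda>x. \<Sum>a\<in>F. f a x"] insert by simp
  then show ?case using insert.hyps by simp
qed

lemma pf_pow:
  fixes g :: "'k::comm_ring_1^'n \<Rightarrow> 'k"
  shows "g \<in> polyfun \<Longrightarrow> (\<lambda>x. g x ^ m) \<in> polyfun"
proof (induction m)
  case 0 then show ?case using pf_const[of 1] by simp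
next
  case (Suc m) then show ?case using pf_mult[of g "\<lambda>x. g x ^ m"] by simp
qed

lemma pf_comp:
  fixes F :: "'k::comm_ring_1^'n \<Rightarrow> 'k^'m"
  assumes "h \<in> polyfun" and F: "polymap F"
  shows "(\<lambda>x. h (F x)) \<in> polyfun"
  using assms(1)
proof (induction h rule: polyfun.induct)
  case (pf_const c) then show ?case by (rule polyfun.pf_const)
next
  case (pf_coord i) then show ?case using F by (simp add: polymap_def)
next
  case (pf_add g h) then show ?case using polyfun.pf_add by blast
next
  case (pf_mult g h) then show ?case using polyfun.pf_mult by blast
qed

lemma polymap_comp:
  fixes F :: "'k::comm_ring_1^'n \<Rightarrow> 'k^'m" and G :: "'k^'m \<Rightarrow> 'k^'p"
  assumes "polymap G" "polymap F"
  shows "polymap (\<lambda>x. G (F x))"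
  unfolding polymap_def
proof
  fix j
  have "(\<lambda>y. G y $ j) \<in> polyfun" using assms(1) by (simp add: polymap_def)
  from pf_comp[OF this assms(2)] show "(\<lambda>x. G (F x) $ j) \<in> polyfun" .
qed

lemma adp_pf:
  fixes r :: "'k::comm_ring_1 \<Rightarrow> 'k"
  assumes "adp r"
  shows "(\<lambda>x::'k^'n. r (x$i)) \<in> polyfun"
proof -
  obtain L c where r: "r = (\<lambda>z. \<Sum>l<L. c l * z ^ (CHAR('k) ^ l))" using assms adp_def adpn_def by blast
  have "(\<lambda>x::'k^'n. \<Sum>l<L. c l * (x$i) ^ (CHAR('k) ^ l)) \<in> polyfun"
  proof (rule pf_sum)
    fix l
    show "(\<lambda>x::'k^'n. c l * (x$i) ^ (CHAR('k) ^ l)) \<in> polyfun"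
      using pf_mult[OF pf_const pf_pow[OF pf_coord]] by blast
  qed
  then show ?thesis by (simp add: r)
qed

lemma amap_polymap:
  fixes F :: "'k::comm_ring_1^'n::finite \<Rightarrow> 'k^'m"
  assumes "amap F" shows "polymap F"
  unfolding polymap_def
proof
  fix j
  obtain r where r: "\<forall>i. adp (r i)" "\<forall>x. F x $ j = (\<Sum>i\<in>UNIV. r i (x$i))"
    using amap_row[OF assms] by blast
  have "(\<lambda>x::'k^'n. \<Sum>i\<in>UNIV. r i (x$i)) \<in> polyfun"
    by (rule pf_sum) (use adp_pf r(1) in blast)
  then show "(\<lambda>x. F x $ j) \<in> polyfun" using r(2) by simp
qed

lemma amap_addpoly:
  fixes a :: "'n::finite \<Rightarrow> 'n \<Rightarrow> nat \<Rightarrow> 'k::comm_ring_1"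
  shows "amap (addpoly_map CHAR('k) a N)"
  unfolding amap_def
proof
  fix j
  define r where "r = (\<lambda>i (z::'k). \<Sum>l\<le>N j. a j i l * z ^ (CHAR('k) ^ l))"
  have "\<forall>i. adp (r i)" unfolding r_def by (intro allI adp_sum adp_mono)
  moreover have "\<forall>x. addpoly_map CHAR('k) a N x $ j = (\<Sum>i\<in>UNIV. r i (x$i))"
    by (simp add: addpoly_map_def r_def)
  ultimately show "\<exists>r. (\<forall>i. adp (r i)) \<and> (\<forall>x. addpoly_map CHAR('k) a N x $ j = (\<Sum>i\<in>UNIV. r i (x $ i)))"
    by (intro exI[of _ r]) blast
qed

lemma amap_linear:
  fixes L :: "'k::field^'n::finite \<Rightarrow> 'k^'m"
  assumes "Vector_Spaces.linear (*s) (*s) L"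
  shows "amap L"
  unfolding amap_def
proof
  fix j
  define r where "r = (\<lambda>i (z::'k). (L (axis i 1) $ j) * z ^ (CHAR('k) ^ 0))"
  have "\<forall>i. adp (r i)" unfolding r_def by (intro allI adp_mono)
  moreover have "\<forall>x. L x $ j = (\<Sum>i\<in>UNIV. r i (x$i))"
  proof
    fix x
    have "L x $ j = (\<Sum>i\<in>UNIV. x$i * (L (axis i 1) $ j))" by (rule linear_componentwise[OF assms])
    then show "L x $ j = (\<Sum>i\<in>UNIV. r i (x$i))" by (simp add: r_def mult.commute)
  qed
  ultimately show "\<exists>r. (\<forall>i. adp (r i)) \<and> (\<forall>x. L x $ j = (\<Sum>i\<in>UNIV. r i (x $ i)))"
    by (intro exI[of _ r]) blast
qed

theorem lemma7p1:
  fixes p :: nat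
    and a :: "'n::finite \<Rightarrow> 'n \<Rightarrow> nat \<Rightarrow> 'k::alg_closed_field"
    and N :: "'n \<Rightarrow> nat"
    and W :: "('k ^ 'n) set"
  assumes "prime p"
    and "CHAR('k) = p"
    and "finite_morphism (addpoly_map p a N)"
    and "bij (addpoly_map p a N)"
    and "vec.subspace W"
  shows "(vec.dim W = 0 \<longrightarrow> (\<exists>x0. {x. addpoly_map p a N x \<in> W} = {x0}))
       \<and> (CARD('d::finite) = vec.dim W \<longrightarrow> iso_affine_space {x. addpoly_map p a N x \<in> W} TYPE('d))"
proof -
  have pr: "prime CHAR('k)" using assms(1,2) by simp
  define f where "f = addpoly_map p a N"
  have af: "amap f" unfolding f_def using amap_addpoly[of a N] assms(2) by simp
  have bf: "bij f" unfolding f_def by (rule assms(4))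
  have W0: "0 \<in> W" using assms(5) vec.subspace_0 by blast
  show ?thesis unfolding f_def[symmetric]
  proof (intro conjI impI)
    assume "vec.dim W = 0"
    then have "W = {0}" using W0 vec.dim_eq_0 by blast
    define x0 where "x0 = inv f 0"
    have fx0: "f x0 = 0" unfolding x0_def using bf by (simp add: bij_def surj_f_inv_f)
    have "{x. f x \<in> W} = {x0}"
    proof
      show "{x. f x \<in> W} \<subseteq> {x0}"
      proof
        fix x assume "x \<in> {x. f x \<in> W}"
        then have "f x = f x0" using \<open>W = {0}\<close> fx0 by simp
        then show "x \<in> {x0}" using bf by (simp add: bij_def inj_eq)
      qed
      show "{x0} \<subseteq> {x. f x \<in> W}" using fx0 W0 by simp
    qed
    then show "\<exists>x0. {x. f x \<in> W} = {x0}" by blast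
  next
    assume cd: "CARD('d) = vec.dim W"
    obtain L :: "'k^'n \<Rightarrow> 'k^'n" and D :: "'n set" where LD: "Vector_Spaces.linear (*s) (*s) L" "bij L"
      "card D = vec.dim W" "\<forall>y. y \<in> W \<longleftrightarrow> L y \<in> sub D"
      using lin_iso_sub[OF assms(5)] by (elim exE conjE) (rule that; assumption)
    define G where "G = (\<lambda>x. L (f x))"
    have aG: "amap G" unfolding G_def by (rule amap_comp[OF pr amap_linear[OF LD(1)] af])
    have bG: "bij G" unfolding G_def using bij_comp[OF bf LD(2)] by (simp add: comp_def)
    have V: "{x. f x \<in> W} = {x. \<forall>j\<in>-D. G x $ j = 0}"
      using LD(4) by (auto simp: G_def sub_def)
    obtain P P' :: "'k^'n \<Rightarrow> 'k^'n" and I :: "'n set" where MP: "amap P" "amap P'"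
      "\<forall>x. P (P' x) = x" "\<forall>x. P' (P x) = x" "card I + card (-D) = CARD('n)"
      "{x. \<forall>j\<in>-D. G x $ j = 0} = P ` sub I"
      using main_lemma[OF pr aG bG, of "-D"] by (elim exE conjE) (rule that; assumption)
    have "card (-D) = CARD('n) - card D" by (simp add: Compl_eq_Diff_UNIV card_Diff_subset)
    moreover have "card D \<le> CARD('n)" by (rule card_mono) auto
    ultimately have cI: "card I = CARD('d)" using MP(5) cd LD(3) by simp
    have fU: "finite (UNIV::'d set)" by simp
    obtain \<beta> :: "'d \<Rightarrow> 'n" where bet: "bij_betw \<beta> UNIV I"
      using finite_same_card_bij[OF fU finite_class.finite_UNIV[THEN finite_subset[OF subset_UNIV]] cI[symmetric]] by blast
    have binj: "inj \<beta>" and bran: "range \<beta> = I" using bet by (auto simp: bij_betw_def)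
    define emb :: "'k^'d \<Rightarrow> 'k^'n" where "emb = (\<lambda>u. \<chi> i. if i \<in> I then u $ (inv \<beta> i) else 0)"
    define \<psi> where "\<psi> = (\<lambda>u. P (emb u))"
    define \<phi> :: "'k^'n \<Rightarrow> 'k^'d" where "\<phi> = (\<lambda>x. \<chi> t. P' x $ \<beta> t)"
    have pemb: "polymap emb" unfolding polymap_def
    proof
      fix i
      show "(\<lambda>u. emb u $ i) \<in> polyfun"
        by (cases "i \<in> I") (simp_all add: emb_def pf_coord pf_const)
    qed
    have pP: "polymap P" "polymap P'" using MP(1,2) amap_polymap by blast+
    have "polymap \<psi>" unfolding \<psi>_def by (rule polymap_comp[OF pP(1) pemb])
    moreover have "polymap \<phi>" unfolding polymap_def \<phi>_def using pP(2) by (simp add: polymap_def)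
    moreover have "range \<psi> \<subseteq> {x. f x \<in> W}"
    proof
      fix x assume "x \<in> range \<psi>"
      then obtain u where u: "x = P (emb u)" by (auto simp: \<psi>_def)
      have "emb u \<in> sub I" by (simp add: emb_def sub_def)
      then show "x \<in> {x. f x \<in> W}" using u V MP(6) by blast
    qed
    moreover have "\<forall>u. \<phi> (\<psi> u) = u"
    proof
      fix u :: "'k^'d"
      have "\<phi> (\<psi> u) = (\<chi> t. emb u $ \<beta> t)" using MP(4) by (simp add: \<phi>_def \<psi>_def)
      also have "\<dots> = u"
      proof -
        have "\<forall>t. \<beta> t \<in> I" using bran by blast
        then show ?thesis using binj by (simp add: emb_def vec_eq_iff)
      qed
      finally show "\<phi> (\<psi> u) = u" .
    qed
    moreover have "\<forall>x\<in>{x. f x \<in> W}. \<psi> (\<phi> x) = x"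
    proof
      fix x assume "x \<in> {x. f x \<in> W}"
      then obtain y where y: "y \<in> sub I" "x = P y" using V MP(6) by blast
      have "\<phi> x = (\<chi> t. y $ \<beta> t)" using y(2) MP(4) by (simp add: \<phi>_def)
      moreover have "emb (\<chi> t. y $ \<beta> t) = y"
      proof (subst vec_eq_iff, rule allI)
        fix i
        show "emb (\<chi> t. y $ \<beta> t) $ i = y $ i"
        proof (cases "i \<in> I")
          case True
          then have "\<beta> (inv \<beta> i) = i" using bran by (metis f_inv_into_f)
          then show ?thesis using True by (simp add: emb_def)
        next
          case False
          then show ?thesis using y(1) by (simp add: emb_def sub_def)
        qed
      qed
      ultimately show "\<psi> (\<phi> x) = x" using y(2) by (simp add: \<psi>_def)
    qed
    ultimately show "iso_affine_space {x. f x \<in> W} TYPE('d)"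
      unfolding iso_affine_space_def by blast
  qed
qed

end
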